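(* Let $p$ be a prime, $n$ a positive integer, and $t$ a real number with $1\le t\le p$. For $A\in GL(n,\mathbf{Q}_p)$ let $\|A\|=\max_{j,k}|a_{j,k}|_p$, $r(A)=\max(\|A-I\|,\|A^{-1}-I\|)$ and $r'(A)=\min(r(A),t)$. Then $r'(I)=0$, $r'(A)>0$ for $A\neq I$, $r'(A^{-1})=r'(A)$, and $r'(AB)\le\max(r'(A),r'(B))$ for all $A,B\in GL(n,\mathbf{Q}_p)$. Consequently $r'(B^{-1}A)$ is a left-invariant ultrametric and $r'(AB^{-1})$ a right-invariant ultrametric on $GL(n,\mathbf{Q}_p)$, each determining the standard topology; and for $A,B\in GL(n,\mathbf{Z}_p)$ one has $r'(B^{-1}A)=\|A-B\|$.
   Context: $GL(n,\mathbf{Q}_p)$ is the group of invertible $n\times n$ matrices over $\mathbf{Q}_p$ with topology induced from $M_n(\mathbf{Q}_p)\cong\mathbf{Q}_p^{n^2}$; $GL(n,\mathbf{Z}_p)=\{A\in M_n(\mathbf{Z}_p): |\det A|_p=1\}$. *)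

theory Defs
  imports "HOL-Analysis.Analysis" "HOL-Computational_Algebra.Primes"
begin

definition padic_abs_rat :: "nat \<Rightarrow> rat \<Rightarrow> real" where
  "padic_abs_rat p q =
     (if q = 0 then 0 else
       (case quotient_of q of (a, b) \<Rightarrow>
          real p powi (int (multiplicity (int p) b) - int (multiplicity (int p) a))))"

text \<open>This characterizes Q_p
  up to isometric isomorphism.\<close>
definition is_Qp :: "nat \<Rightarrow> ('a::field_char_0 \<Rightarrow> real) \<Rightarrow> bool" where
  "is_Qp p v \<longleftrightarrow>
     (\<forall>x. 0 \<le> v x) \<and> (\<forall>x. v x = 0 \<longleftrightarrow> x = 0) \<and>
     (\<forall>x y. v (x * y) = v x * v y) \<and>
     (\<forall>x y. v (x + y) \<le> max (v x) (v y)) \<and>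
     (\<forall>q. v (of_rat q) = padic_abs_rat p q) \<and>
     (\<forall>X :: nat \<Rightarrow> 'a. (\<forall>e>0. \<exists>N. \<forall>m\<ge>N. \<forall>k\<ge>N. v (X m - X k) < e) \<longrightarrow>
          (\<exists>L. \<forall>e>0. \<exists>N. \<forall>m\<ge>N. v (X m - L) < e)) \<and>
     (\<forall>x e. e > 0 \<longrightarrow> (\<exists>q. v (x - of_rat q) < e))"

definition mnorm :: "('a \<Rightarrow> real) \<Rightarrow> 'a^'n::finite^'n \<Rightarrow> real" where
  "mnorm v A = Max (range (\<lambda>(j, k). v (A $ j $ k)))"

definition GLn :: "('a::field^'n::finite^'n) set" where
  "GLn = {A. invertible A}"

definition GLZ :: "('a \<Rightarrow> real) \<Rightarrow> ('a::field^'n::finite^'n) set" where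
  "GLZ v = {A. (\<forall>j k. v (A $ j $ k) \<le> 1) \<and> v (det A) = 1}"

definition rr :: "('a \<Rightarrow> real) \<Rightarrow> 'a::field^'n::finite^'n \<Rightarrow> real" where
  "rr v A = max (mnorm v (A - mat 1)) (mnorm v (matrix_inv A - mat 1))"

definition rr' :: "('a \<Rightarrow> real) \<Rightarrow> real \<Rightarrow> 'a::field^'n::finite^'n \<Rightarrow> real" where
  "rr' v t A = min (rr v A) t"

definition ultrametric_on :: "'b set \<Rightarrow> ('b \<Rightarrow> 'b \<Rightarrow> real) \<Rightarrow> bool" where
  "ultrametric_on S d \<longleftrightarrow>
     (\<forall>x\<in>S. \<forall>y\<in>S. 0 \<le> d x y \<and> (d x y = 0 \<longleftrightarrow> x = y) \<and> d x y = d y x) \<and>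
     (\<forall>x\<in>S. \<forall>y\<in>S. \<forall>z\<in>S. d x z \<le> max (d x y) (d y z))"

definition d_open :: "'b set \<Rightarrow> ('b \<Rightarrow> 'b \<Rightarrow> real) \<Rightarrow> 'b set \<Rightarrow> bool" where
  "d_open S d U \<longleftrightarrow> U \<subseteq> S \<and> (\<forall>x\<in>U. \<exists>e>0. \<forall>y\<in>S. d x y < e \<longrightarrow> y \<in> U)"

end

theory Submission
  imports Defs
begin


locale qp =
  fixes p :: nat and v :: "'a::field_char_0 \<Rightarrow> real"
  assumes Qp: "is_Qp p v" and pr: "prime p"
begin

lemmas QpD = Qp[unfolded is_Qp_def]
lemma v_nonneg: "0 \<le> v x" using conjunct1[OF QpD] by blast
lemma v_zero_iff: "v x = 0 \<longleftrightarrow> x = 0" using conjunct1[OF conjunct2[OF QpD]] by blast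
lemma v_mult: "v (x * y) = v x * v y" using conjunct1[OF conjunct2[OF conjunct2[OF QpD]]] by blast
lemma v_add: "v (x + y) \<le> max (v x) (v y)" using conjunct1[OF conjunct2[OF conjunct2[OF conjunct2[OF QpD]]]] by blast
lemma v_rat: "v (of_rat q) = padic_abs_rat p q" using conjunct1[OF conjunct2[OF conjunct2[OF conjunct2[OF conjunct2[OF QpD]]]]] by blast
lemma v_dense: "e > 0 \<Longrightarrow> \<exists>q. v (x - of_rat q) < e" using conjunct2[OF conjunct2[OF conjunct2[OF conjunct2[OF conjunct2[OF conjunct2[OF QpD]]]]]] by blast

lemma v_one: "v 1 = 1"
proof -
  have "v (of_rat 1) = padic_abs_rat p 1" by (rule v_rat)
  then show ?thesis by (simp add: padic_abs_rat_def)
qed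

lemma v_zero[simp]: "v 0 = 0" using v_zero_iff by simp

lemma v_minus_one: "v (-1) = 1"
proof -
  have "v (-1) * v (-1) = 1" using v_mult[of "-1" "-1"] v_one by simp
  moreover have "v (-1) \<ge> 0" by (rule v_nonneg)
  ultimately show ?thesis using power2_eq_1_iff[of "v (-1)"] by (auto simp: power2_eq_square)
qed

lemma v_uminus: "v (- x) = v x"
  using v_mult[of "-1" x] v_minus_one by simp

lemma v_diff_comm: "v (x - y) = v (y - x)"
  using v_uminus[of "x - y"] by simp

lemma v_diff: "v (x - y) \<le> max (v x) (v y)"
  using v_add[of x "-y"] v_uminus[of y] by simp

lemma v_sum: "finite S \<Longrightarrow> (\<And>i. i \<in> S \<Longrightarrow> v (f i) \<le> c) \<Longrightarrow> 0 \<le> c \<Longrightarrow> v (sum f S) \<le> c"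
proof (induction S rule: finite_induct)
  case empty then show ?case by simp
next
  case (insert x F)
  have "v (sum f (insert x F)) = v (f x + sum f F)" using insert by simp
  also have "\<dots> \<le> max (v (f x)) (v (sum f F))" by (rule v_add)
  also have "\<dots> \<le> c" using insert by auto
  finally show ?case .
qed

lemma v_prod: "finite S \<Longrightarrow> v (prod f S) = (\<Prod>i\<in>S. v (f i))"
  by (induction S rule: finite_induct) (auto simp: v_one v_mult)

lemma p_gt1: "real p > 1" using pr prime_gt_1_nat by simp

lemma v_gt1: assumes "v x > 1" shows "v x \<ge> real p"
proof -
  obtain q where q: "v (x - of_rat q) < v x" using v_dense[of "v x" x] assms by auto
  have "v x \<le> max (v (of_rat q)) (v (x - of_rat q))" using v_add[of "of_rat q" "x - of_rat q"] by simp
  with q have le: "v x \<le> v (of_rat q)" by auto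
  have "v (of_rat q) \<le> max (v x) (v (x - of_rat q))" using v_diff[of x "x - of_rat q"] by simp
  with q have "v (of_rat q) \<le> v x" by auto
  with le have eq: "v (of_rat q) = v x" by simp
  then have q0: "q \<noteq> 0" using assms by auto
  obtain a b where ab: "quotient_of q = (a, b)" by (cases "quotient_of q")
  define k where "k = int (multiplicity (int p) b) - int (multiplicity (int p) a)"
  have vq: "v x = real p powi k" using eq v_rat[of q] q0 ab by (simp add: padic_abs_rat_def k_def)
  have "k \<ge> 1"
  proof (rule ccontr)
    assume "\<not> k \<ge> 1"
    then have "k \<le> 0" by simp
    then have "real p powi k \<le> real p powi 0" using p_gt1 by (intro power_int_increasing) auto
    then show False using vq assms by simp
  qed
  then have "real p powi 1 \<le> real p powi k" using p_gt1 by (intro power_int_increasing) auto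
  then show ?thesis using vq by simp
qed


lemma v_div: "v y = 1 \<Longrightarrow> v (x / y) = v x"
proof -
  assume y: "v y = 1"
  then have "y \<noteq> 0" using v_zero_iff by force
  then have "x = (x / y) * y" by simp
  then have "v x = v (x / y) * v y" using v_mult by metis
  with y show ?thesis by simp
qed

lemma v_of_int_sign: "v (of_int (sign q)) = 1"
  by (cases "sign q = 1") (auto simp: sign_def v_one v_minus_one)

subsection \<open>Matrix norm\<close>

lemma mnorm_ge: "v (A $ j $ k) \<le> mnorm v A"
  unfolding mnorm_def by (rule Max_ge) auto

lemma mnorm_le: "(\<And>j k. v (A $ j $ k) \<le> c) \<Longrightarrow> mnorm v A \<le> c"
  unfolding mnorm_def by (subst Max_le_iff) auto

lemma mnorm_attained: "\<exists>j k. mnorm v A = v (A $ j $ k)"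
proof -
  have "mnorm v A \<in> range (\<lambda>(j, k). v (A $ j $ k))"
    unfolding mnorm_def by (rule Max_in) auto
  then show ?thesis by auto
qed

lemma mnorm_nonneg: "0 \<le> mnorm v A"
  using mnorm_ge[of A] v_nonneg order_trans by blast

lemma mnorm_zero_iff: "mnorm v A = 0 \<longleftrightarrow> A = 0"
proof
  assume "mnorm v A = 0"
  then have "\<And>j k. v (A $ j $ k) = 0" using mnorm_ge v_nonneg by (metis order_antisym)
  then show "A = 0" by (simp add: v_zero_iff vec_eq_iff)
next
  assume "A = 0"
  then show "mnorm v A = 0" using mnorm_le[of A 0] mnorm_nonneg[of A] by simp
qed

lemma mnorm_diff_comm: "mnorm v (A - B) = mnorm v (B - A)"
  unfolding mnorm_def by (simp add: v_diff_comm)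

lemma mnorm_add: "mnorm v (A + B) \<le> max (mnorm v A) (mnorm v B)"
proof (rule mnorm_le)
  fix j k
  have "v ((A + B) $ j $ k) \<le> max (v (A $ j $ k)) (v (B $ j $ k))" using v_add by simp
  also have "\<dots> \<le> max (mnorm v A) (mnorm v B)" using mnorm_ge max.mono by blast
  finally show "v ((A + B) $ j $ k) \<le> max (mnorm v A) (mnorm v B)" .
qed

lemma mnorm_mult: "mnorm v (A ** B) \<le> mnorm v A * mnorm v B"
proof (rule mnorm_le)
  fix j k
  have "v ((A ** B) $ j $ k) = v (\<Sum>l\<in>UNIV. A $ j $ l * B $ l $ k)"
    by (simp add: matrix_matrix_mult_def)
  also have "\<dots> \<le> mnorm v A * mnorm v B"
  proof (rule v_sum)
    fix l
    show "v (A $ j $ l * B $ l $ k) \<le> mnorm v A * mnorm v B"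
      unfolding v_mult by (intro mult_mono mnorm_ge mnorm_nonneg v_nonneg)
  qed (auto intro: mult_nonneg_nonneg mnorm_nonneg)
  finally show "v ((A ** B) $ j $ k) \<le> mnorm v A * mnorm v B" .
qed

lemma mnorm_mat1: "mnorm v (mat 1 :: 'a^'n::finite^'n) = 1"
proof (rule order_antisym)
  show "mnorm v (mat 1 :: 'a^'n::finite^'n) \<le> 1"
    by (rule mnorm_le) (auto simp: mat_def v_one)
  obtain i :: 'n where True by simp
  have "v ((mat 1 :: 'a^'n::finite^'n) $ i $ i) \<le> mnorm v (mat 1 :: 'a^'n::finite^'n)" by (rule mnorm_ge)
  then show "1 \<le> mnorm v (mat 1 :: 'a^'n::finite^'n)" by (simp add: mat_def v_one)
qed

lemma mnorm_gt1: "mnorm v A > 1 \<Longrightarrow> mnorm v A \<ge> real p"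
  using mnorm_attained[of A] v_gt1 by metis

end

subsection \<open>Matrix algebra\<close>

lemma mm_diff_left: "(A::'a::comm_ring_1^'n::finite^'n) ** (B - C) = A ** B - A ** C"
  by (vector matrix_matrix_mult_def sum_subtractf[symmetric] field_simps)

lemma mm_diff_right: "((A::'a::comm_ring_1^'n::finite^'n) - B) ** C = A ** C - B ** C"
  by (vector matrix_matrix_mult_def sum_subtractf[symmetric] field_simps)

lemma inv_right: "invertible (A::'a::field^'n::finite^'n) \<Longrightarrow> A ** matrix_inv A = mat 1"
  unfolding invertible_def matrix_inv_def by (rule someI_ex[THEN conjunct1])

lemma inv_left: "invertible (A::'a::field^'n::finite^'n) \<Longrightarrow> matrix_inv A ** A = mat 1"
  unfolding invertible_def matrix_inv_def by (rule someI_ex[THEN conjunct2])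

lemma inv_unique_r: assumes "invertible (A::'a::field^'n::finite^'n)" "A ** X = mat 1"
  shows "matrix_inv A = X"
proof -
  have "matrix_inv A = matrix_inv A ** (A ** X)" using assms by simp
  also have "\<dots> = X" using inv_left[OF assms(1)] by (simp add: matrix_mul_assoc)
  finally show ?thesis .
qed

lemma inv_unique_l: assumes "invertible (A::'a::field^'n::finite^'n)" "X ** A = mat 1"
  shows "matrix_inv A = X"
proof -
  have "matrix_inv A = (X ** A) ** matrix_inv A" using assms by simp
  also have "\<dots> = X" using inv_right[OF assms(1)] by (simp flip: matrix_mul_assoc)
  finally show ?thesis .
qed

lemma invertible_inv: "invertible (A::'a::field^'n::finite^'n) \<Longrightarrow> invertible (matrix_inv A)"
  unfolding invertible_def using inv_left inv_right invertible_def by blast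

lemma inv_inv: "invertible (A::'a::field^'n::finite^'n) \<Longrightarrow> matrix_inv (matrix_inv A) = A"
  by (intro inv_unique_r invertible_inv inv_left)

lemma inv_mult: assumes "invertible (A::'a::field^'n::finite^'n)" "invertible (B::'a^'n^'n)"
  shows "matrix_inv (A ** B) = matrix_inv B ** matrix_inv A"
proof (rule inv_unique_r)
  show "invertible (A ** B)" using assms by (rule invertible_mult)
  have "A ** B ** (matrix_inv B ** matrix_inv A) = A ** (B ** matrix_inv B) ** matrix_inv A"
    by (simp add: matrix_mul_assoc)
  also have "\<dots> = mat 1" using assms by (simp add: inv_right)
  finally show "A ** B ** (matrix_inv B ** matrix_inv A) = mat 1" .
qed

lemma inv_mat1: "matrix_inv (mat 1 :: 'a::field^'n::finite^'n) = mat 1"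
proof (rule inv_unique_r)
  show "invertible (mat 1 :: 'a::field^'n::finite^'n)" unfolding invertible_def by (rule exI[of _ "mat 1"]) simp
qed simp

lemma mat1_nz: "(mat 1 :: 'a::field^'n::finite^'n) \<noteq> 0"
proof
  obtain i :: 'n where True by simp
  assume "(mat 1 :: 'a::field^'n::finite^'n) = 0"
  then have "(mat 1 :: 'a::field^'n::finite^'n) $ i $ i = 0" by simp
  then show False by (simp add: mat_def)
qed

lemma inv_nz: "invertible (A::'a::field^'n::finite^'n) \<Longrightarrow> matrix_inv A \<noteq> 0"
  using inv_left[of A] mat1_nz by force

lemma inv_eq_mat1_iff: "invertible (A::'a::field^'n::finite^'n) \<Longrightarrow> A = mat 1 \<longleftrightarrow> matrix_inv A = mat 1"
  using inv_mat1 inv_inv by metis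


context qp begin

lemma small_inv:
  fixes X :: "'a^'n::finite^'n"
  assumes X: "invertible X" and s: "mnorm v (X - mat 1) < 1"
  shows "mnorm v (matrix_inv X - mat 1) \<le> mnorm v (X - mat 1)"
proof -
  let ?Y = "matrix_inv X" and ?n = "mnorm v (X - mat 1)"
  have n': "mnorm v (mat 1 - X) = ?n" by (rule mnorm_diff_comm)
  have e: "?Y - mat 1 = ?Y ** (mat 1 - X)" by (simp add: mm_diff_left inv_left[OF X])
  have Yle: "mnorm v ?Y \<le> 1"
  proof (rule ccontr)
    assume g: "\<not> mnorm v ?Y \<le> 1"
    have "?Y = mat 1 + ?Y ** (mat 1 - X)" using e by (simp add: algebra_simps)
    then have "mnorm v ?Y \<le> max (mnorm v (mat 1 :: 'a^'n^'n)) (mnorm v (?Y ** (mat 1 - X)))"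
      using mnorm_add by metis
    also have "\<dots> \<le> max 1 (mnorm v ?Y * ?n)" using mnorm_mult[of ?Y "mat 1 - X"] n'
      by (simp add: max.coboundedI2 mnorm_mat1)
    finally have "mnorm v ?Y \<le> max 1 (mnorm v ?Y * ?n)" .
    moreover have "mnorm v ?Y * ?n < mnorm v ?Y" using g s by simp
    ultimately show False using g by linarith
  qed
  have "mnorm v (?Y - mat 1) \<le> mnorm v ?Y * ?n" using e mnorm_mult[of ?Y "mat 1 - X"] n' by simp
  also have "\<dots> \<le> 1 * ?n" using Yle mnorm_nonneg by (intro mult_right_mono) auto
  finally show ?thesis by simp
qed

lemma prod_small:
  fixes X Y :: "'a^'n::finite^'n"
  assumes "mnorm v (X - mat 1) \<le> 1" "mnorm v (Y - mat 1) \<le> 1"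
  shows "mnorm v (X ** Y - mat 1) \<le> max (mnorm v (X - mat 1)) (mnorm v (Y - mat 1))"
proof -
  let ?a = "mnorm v (X - mat 1)" and ?b = "mnorm v (Y - mat 1)"
  have e: "X ** Y - mat 1 = (X - mat 1) ** (Y - mat 1) + (X - mat 1) + (Y - mat 1)"
    by (simp add: mm_diff_left mm_diff_right algebra_simps)
  have "mnorm v ((X - mat 1) ** (Y - mat 1)) \<le> ?a * ?b" by (rule mnorm_mult)
  also have "\<dots> \<le> 1 * ?b" using assms mnorm_nonneg by (intro mult_right_mono) auto
  finally have m: "mnorm v ((X - mat 1) ** (Y - mat 1)) \<le> ?b" by simp
  have "mnorm v (X ** Y - mat 1) \<le> max (mnorm v ((X - mat 1) ** (Y - mat 1) + (X - mat 1))) ?b"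
    unfolding e by (rule mnorm_add)
  also have "\<dots> \<le> max (max (mnorm v ((X - mat 1) ** (Y - mat 1))) ?a) ?b"
    using mnorm_add max.mono by blast
  also have "\<dots> \<le> max ?a ?b" using m by simp
  finally show ?thesis .
qed

lemma rr_nonneg: "0 \<le> rr v A" unfolding rr_def by (simp add: max.coboundedI1 mnorm_nonneg)

lemma rr_mat1: "rr v (mat 1 :: 'a^'n::finite^'n) = 0"
  unfolding rr_def by (simp add: inv_mat1 mnorm_zero_iff)

lemma rr_zero_iff: "invertible (A :: 'a^'n::finite^'n) \<Longrightarrow> rr v A = 0 \<longleftrightarrow> A = mat 1"
proof
  assume "rr v A = 0"
  then have "mnorm v (A - mat 1) = 0" unfolding rr_def using mnorm_nonneg
    by (metis max.absorb_iff2 max.cobounded1 order_antisym)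
  then show "A = mat 1" by (simp add: mnorm_zero_iff)
qed (simp add: rr_mat1)

lemma rr_inv: "invertible (A :: 'a^'n::finite^'n) \<Longrightarrow> rr v (matrix_inv A) = rr v A"
  unfolding rr_def by (simp add: inv_inv max.commute)

lemma rr_gt1: "rr v A > 1 \<Longrightarrow> rr v A \<ge> real p"
  unfolding rr_def using mnorm_gt1 by (auto simp: max_def)

lemma rr_mult_small:
  fixes A B :: "'a^'n::finite^'n"
  assumes A: "invertible A" and B: "invertible B" and "rr v A \<le> 1" "rr v B \<le> 1"
  shows "rr v (A ** B) \<le> max (rr v A) (rr v B)"
proof -
  have a: "mnorm v (A - mat 1) \<le> rr v A" "mnorm v (matrix_inv A - mat 1) \<le> rr v A"
    unfolding rr_def by auto
  have b: "mnorm v (B - mat 1) \<le> rr v B" "mnorm v (matrix_inv B - mat 1) \<le> rr v B"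
    unfolding rr_def by auto
  have 1: "mnorm v (A ** B - mat 1) \<le> max (rr v A) (rr v B)"
    using prod_small[of A B] a b assms by (smt (verit, best) max.mono)
  have 2: "mnorm v (matrix_inv B ** matrix_inv A - mat 1) \<le> max (rr v A) (rr v B)"
    using prod_small[of "matrix_inv B" "matrix_inv A"] a b assms by (smt (verit, best) max.mono max.commute)
  show ?thesis unfolding rr_def[of v "A ** B"] inv_mult[OF A B] using 1 2 by simp
qed

end

locale qpt = qp p v for p v +
  fixes t :: real
  assumes t1: "1 \<le> t" and tp: "t \<le> real p"
begin

lemma rr'_nonneg: "0 \<le> rr' v t A" unfolding rr'_def using rr_nonneg t1 by simp

lemma rr'_le_rr: "rr' v t A \<le> rr v A" unfolding rr'_def by simp

lemma rr'_mat1: "rr' v t (mat 1 :: 'a^'n::finite^'n) = 0"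
  unfolding rr'_def using t1 by (simp add: rr_mat1)

lemma rr'_zero_iff: "invertible (A :: 'a^'n::finite^'n) \<Longrightarrow> rr' v t A = 0 \<longleftrightarrow> A = mat 1"
  unfolding rr'_def using rr_zero_iff[of A] t1 by (auto simp: min_def)

lemma rr'_pos: "invertible (A :: 'a^'n::finite^'n) \<Longrightarrow> A \<noteq> mat 1 \<Longrightarrow> rr' v t A > 0"
  using rr'_zero_iff rr'_nonneg by (metis order_le_less)

lemma rr'_inv: "invertible (A :: 'a^'n::finite^'n) \<Longrightarrow> rr' v t (matrix_inv A) = rr' v t A"
  unfolding rr'_def by (simp add: rr_inv)

lemma rr'_mult:
  fixes A B :: "'a^'n::finite^'n"
  assumes A: "invertible A" and B: "invertible B"
  shows "rr' v t (A ** B) \<le> max (rr' v t A) (rr' v t B)"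
proof (cases "rr v A \<le> 1 \<and> rr v B \<le> 1")
  case True
  then have "rr v (A ** B) \<le> max (rr v A) (rr v B)" using rr_mult_small A B by blast
  then show ?thesis unfolding rr'_def by (auto simp: min_def max_def)
next
  case False
  then have "rr v A \<ge> t \<or> rr v B \<ge> t" using rr_gt1[of A] rr_gt1[of B] tp by force
  then have "rr' v t A = t \<or> rr' v t B = t" unfolding rr'_def by auto
  moreover have "rr' v t (A ** B) \<le> t" unfolding rr'_def by simp
  ultimately show ?thesis by (metis max.coboundedI1 max.coboundedI2)
qed

lemma rr'_less_t: "rr' v t A < d \<Longrightarrow> d \<le> t \<Longrightarrow> rr v A < d"
  unfolding rr'_def by (simp add: min_def split: if_splits)


lemma invertible_prod_inv: "invertible (A::'a^'n::finite^'n) \<Longrightarrow> invertible (B::'a^'n^'n) \<Longrightarrow> invertible (matrix_inv B ** A)"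
  by (intro invertible_mult invertible_inv)

lemma invertible_prod_inv2: "invertible (A::'a^'n::finite^'n) \<Longrightarrow> invertible (B::'a^'n^'n) \<Longrightarrow> invertible (A ** matrix_inv B)"
  by (intro invertible_mult invertible_inv)

lemma ultra_left: "ultrametric_on GLn (\<lambda>A B::'a^'n::finite^'n. rr' v t (matrix_inv B ** A))"
  unfolding ultrametric_on_def GLn_def
proof (intro conjI ballI)
  fix A B :: "'a^'n^'n" assume A: "A \<in> {A. invertible A}" and B: "B \<in> {A. invertible A}"
  then have A: "invertible A" and B: "invertible B" by auto
  show "0 \<le> rr' v t (matrix_inv B ** A)" by (rule rr'_nonneg)
  have "matrix_inv B ** A = mat 1 \<longleftrightarrow> A = B"
  proof
    assume "matrix_inv B ** A = mat 1"
    then have "matrix_inv A = matrix_inv B" by (rule inv_unique_l[OF A])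
    then show "A = B" using inv_inv A B by metis
  qed (simp add: inv_left B)
  then show "(rr' v t (matrix_inv B ** A) = 0) = (A = B)"
    using rr'_zero_iff[OF invertible_prod_inv[OF A B]] by simp
  have "matrix_inv (matrix_inv B ** A) = matrix_inv A ** B"
    by (simp add: inv_mult invertible_inv A B inv_inv)
  then show "rr' v t (matrix_inv B ** A) = rr' v t (matrix_inv A ** B)"
    using rr'_inv[OF invertible_prod_inv[OF A B]] by simp
next
  fix x y z :: "'a^'n^'n" assume "x \<in> {A. invertible A}" "y \<in> {A. invertible A}" "z \<in> {A. invertible A}"
  then have x: "invertible x" and y: "invertible y" and z: "invertible z" by auto
  have "matrix_inv z ** x = (matrix_inv z ** y) ** (matrix_inv y ** x)"
    by (simp add: matrix_mul_assoc) (simp flip: matrix_mul_assoc add: inv_right y)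
  then have "rr' v t (matrix_inv z ** x) \<le> max (rr' v t (matrix_inv z ** y)) (rr' v t (matrix_inv y ** x))"
    using rr'_mult[OF invertible_prod_inv[OF y z] invertible_prod_inv[OF x y]] by simp
  then show "rr' v t (matrix_inv z ** x) \<le> max (rr' v t (matrix_inv y ** x)) (rr' v t (matrix_inv z ** y))"
    by (simp add: max.commute)
qed

lemma ultra_right: "ultrametric_on GLn (\<lambda>A B::'a^'n::finite^'n. rr' v t (A ** matrix_inv B))"
  unfolding ultrametric_on_def GLn_def
proof (intro conjI ballI)
  fix A B :: "'a^'n^'n" assume A: "A \<in> {A. invertible A}" and B: "B \<in> {A. invertible A}"
  then have A: "invertible A" and B: "invertible B" by auto
  show "0 \<le> rr' v t (A ** matrix_inv B)" by (rule rr'_nonneg)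
  have "A ** matrix_inv B = mat 1 \<longleftrightarrow> A = B"
  proof
    assume "A ** matrix_inv B = mat 1"
    then have "matrix_inv (matrix_inv B) = A" by (rule inv_unique_l[OF invertible_inv[OF B]])
    then show "A = B" using inv_inv B by metis
  qed (simp add: inv_right B)
  then show "(rr' v t (A ** matrix_inv B) = 0) = (A = B)"
    using rr'_zero_iff[OF invertible_prod_inv2[OF A B]] by simp
  have "matrix_inv (A ** matrix_inv B) = B ** matrix_inv A"
    by (simp add: inv_mult invertible_inv A B inv_inv)
  then show "rr' v t (A ** matrix_inv B) = rr' v t (B ** matrix_inv A)"
    using rr'_inv[OF invertible_prod_inv2[OF A B]] by simp
next
  fix x y z :: "'a^'n^'n" assume "x \<in> {A. invertible A}" "y \<in> {A. invertible A}" "z \<in> {A. invertible A}"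
  then have x: "invertible x" and y: "invertible y" and z: "invertible z" by auto
  have "x ** matrix_inv z = (x ** matrix_inv y) ** (y ** matrix_inv z)"
    by (simp add: matrix_mul_assoc) (simp flip: matrix_mul_assoc add: inv_left y)
  then show "rr' v t (x ** matrix_inv z) \<le> max (rr' v t (x ** matrix_inv y)) (rr' v t (y ** matrix_inv z))"
    using rr'_mult[OF invertible_prod_inv2[OF x y] invertible_prod_inv2[OF y z]] by simp
qed

lemma left_inv: "invertible (A::'a^'n::finite^'n) \<Longrightarrow> invertible (B::'a^'n^'n) \<Longrightarrow> invertible (C::'a^'n^'n) \<Longrightarrow>
   rr' v t (matrix_inv (C ** B) ** (C ** A)) = rr' v t (matrix_inv B ** A)"
proof -
  assume A: "invertible A" and B: "invertible B" and C: "invertible C"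
  have "matrix_inv (C ** B) ** (C ** A) = matrix_inv B ** (matrix_inv C ** C) ** A"
    by (simp add: inv_mult B C matrix_mul_assoc)
  then show ?thesis by (simp add: inv_left C)
qed

lemma right_inv: "invertible (A::'a^'n::finite^'n) \<Longrightarrow> invertible (B::'a^'n^'n) \<Longrightarrow> invertible (C::'a^'n^'n) \<Longrightarrow>
   rr' v t ((A ** C) ** matrix_inv (B ** C)) = rr' v t (A ** matrix_inv B)"
proof -
  assume A: "invertible A" and B: "invertible B" and C: "invertible C"
  have "(A ** C) ** matrix_inv (B ** C) = A ** (C ** matrix_inv C) ** matrix_inv B"
    by (simp add: inv_mult B C matrix_mul_assoc)
  then show ?thesis by (simp add: inv_right C)
qed

end

lemma d_open_equiv:
  assumes 1: "\<forall>x\<in>S. \<forall>e>0. \<exists>d>0. \<forall>y\<in>S. d2 x y < d \<longrightarrow> d1 x y < e"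
    and 2: "\<forall>x\<in>S. \<forall>e>0. \<exists>d>0. \<forall>y\<in>S. d1 x y < d \<longrightarrow> d2 x y < e"
  shows "d_open S d1 U \<longleftrightarrow> d_open S d2 U"
proof
  assume "d_open S d1 U"
  then have U: "U \<subseteq> S" and h: "\<forall>x\<in>U. \<exists>e>0. \<forall>y\<in>S. d1 x y < e \<longrightarrow> y \<in> U"
    unfolding d_open_def by auto
  show "d_open S d2 U" unfolding d_open_def
  proof (intro conjI ballI U)
    fix x assume x: "x \<in> U"
    then obtain e where e: "e > 0" "\<forall>y\<in>S. d1 x y < e \<longrightarrow> y \<in> U" using h by auto
    obtain d where "d > 0" "\<forall>y\<in>S. d2 x y < d \<longrightarrow> d1 x y < e" using 1 x U e by blast
    then show "\<exists>e>0. \<forall>y\<in>S. d2 x y < e \<longrightarrow> y \<in> U" using e by blast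
  qed
next
  assume "d_open S d2 U"
  then have U: "U \<subseteq> S" and h: "\<forall>x\<in>U. \<exists>e>0. \<forall>y\<in>S. d2 x y < e \<longrightarrow> y \<in> U"
    unfolding d_open_def by auto
  show "d_open S d1 U" unfolding d_open_def
  proof (intro conjI ballI U)
    fix x assume x: "x \<in> U"
    then obtain e where e: "e > 0" "\<forall>y\<in>S. d2 x y < e \<longrightarrow> y \<in> U" using h by auto
    obtain d where "d > 0" "\<forall>y\<in>S. d1 x y < d \<longrightarrow> d2 x y < e" using 2 x U e by blast
    then show "\<exists>e>0. \<forall>y\<in>S. d1 x y < e \<longrightarrow> y \<in> U" using e by blast
  qed
qed


context qpt begin

lemma mnorm_inv_pos: "invertible (A::'a^'n::finite^'n) \<Longrightarrow> mnorm v (matrix_inv A) > 0"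
  using mnorm_nonneg[of "matrix_inv A"] mnorm_zero_iff[of "matrix_inv A"] inv_nz[of A] by linarith

lemma mnorm_pos: "invertible (A::'a^'n::finite^'n) \<Longrightarrow> mnorm v A > 0"
  using mnorm_inv_pos[OF invertible_inv, of A] inv_inv[of A] by simp

lemma rr_both:
  assumes X: "invertible (X::'a^'n::finite^'n)" and "mnorm v (X - mat 1) < e" "e \<le> 1"
  shows "rr v X < e" "rr v (matrix_inv X) < e"
proof -
  have "mnorm v (matrix_inv X - mat 1) \<le> mnorm v (X - mat 1)" using small_inv[OF X] assms by simp
  then show "rr v X < e" unfolding rr_def using assms by simp
  then show "rr v (matrix_inv X) < e" using rr_inv[OF X] by simp
qed

lemma top_left1:
  assumes A: "invertible (A::'a^'n::finite^'n)" and e: "e > 0"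
  shows "\<exists>d>0. \<forall>B\<in>GLn. mnorm v (A - B) < d \<longrightarrow> rr' v t (matrix_inv B ** A) < e"
proof -
  let ?K = "mnorm v (matrix_inv A)"
  have K: "?K > 0" by (rule mnorm_inv_pos[OF A])
  define d where "d = min 1 e / ?K"
  have d: "d > 0" using K e by (simp add: d_def)
  have "\<forall>B\<in>GLn. mnorm v (A - B) < d \<longrightarrow> rr' v t (matrix_inv B ** A) < e"
  proof (intro ballI impI)
    fix B :: "'a^'n^'n" assume "B \<in> GLn" and h: "mnorm v (A - B) < d"
    then have B: "invertible B" by (simp add: GLn_def)
    let ?X = "matrix_inv A ** B"
    have X: "invertible ?X" by (rule invertible_prod_inv[OF B A])
    have "?X - mat 1 = matrix_inv A ** (B - A)" by (simp add: mm_diff_left inv_left A)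
    then have "mnorm v (?X - mat 1) \<le> ?K * mnorm v (B - A)" using mnorm_mult by metis
    also have "\<dots> < ?K * d" using h K by (simp add: mnorm_diff_comm)
    also have "\<dots> = min 1 e" using K by (simp add: d_def)
    finally have lt: "mnorm v (?X - mat 1) < min 1 e" .
    have "rr v (matrix_inv ?X) < min 1 e" using rr_both[OF X lt] by simp
    moreover have "matrix_inv ?X = matrix_inv B ** A" by (simp add: inv_mult invertible_inv A B inv_inv)
    ultimately have "rr v (matrix_inv B ** A) < e" by simp
    then show "rr' v t (matrix_inv B ** A) < e" using rr'_le_rr by (meson le_less_trans)
  qed
  with d show ?thesis by blast
qed

lemma top_left2:
  assumes A: "invertible (A::'a^'n::finite^'n)" and e: "e > 0"
  shows "\<exists>d>0. \<forall>B\<in>GLn. rr' v t (matrix_inv B ** A) < d \<longrightarrow> mnorm v (A - B) < e"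
proof -
  let ?K = "mnorm v A"
  have K: "?K > 0" by (rule mnorm_pos[OF A])
  define d where "d = min t (e / ?K)"
  have d: "d > 0" using K e t1 by (simp add: d_def)
  have "\<forall>B\<in>GLn. rr' v t (matrix_inv B ** A) < d \<longrightarrow> mnorm v (A - B) < e"
  proof (intro ballI impI)
    fix B :: "'a^'n^'n" assume "B \<in> GLn" and h: "rr' v t (matrix_inv B ** A) < d"
    then have B: "invertible B" by (simp add: GLn_def)
    have "rr v (matrix_inv B ** A) < d" using rr'_less_t[OF h] by (simp add: d_def)
    then have "rr v (matrix_inv A ** B) < d"
      using rr_inv[OF invertible_prod_inv[OF A B]] by (simp add: inv_mult invertible_inv A B inv_inv)
    then have lt: "mnorm v (matrix_inv A ** B - mat 1) < d" unfolding rr_def by simp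
    have "B - A = A ** (matrix_inv A ** B - mat 1)"
      by (simp add: mm_diff_left matrix_mul_assoc inv_right A)
    then have "mnorm v (B - A) \<le> ?K * mnorm v (matrix_inv A ** B - mat 1)" using mnorm_mult by metis
    also have "\<dots> < ?K * d" using lt K by simp
    also have "\<dots> \<le> ?K * (e / ?K)" using K by (intro mult_left_mono) (auto simp: d_def)
    also have "\<dots> = e" using K by simp
    finally show "mnorm v (A - B) < e" by (simp add: mnorm_diff_comm)
  qed
  with d show ?thesis by blast
qed

lemma top_right1:
  assumes A: "invertible (A::'a^'n::finite^'n)" and e: "e > 0"
  shows "\<exists>d>0. \<forall>B\<in>GLn. mnorm v (A - B) < d \<longrightarrow> rr' v t (A ** matrix_inv B) < e"
proof -
  let ?K = "mnorm v (matrix_inv A)"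
  have K: "?K > 0" by (rule mnorm_inv_pos[OF A])
  define d where "d = min 1 e / ?K"
  have d: "d > 0" using K e by (simp add: d_def)
  have "\<forall>B\<in>GLn. mnorm v (A - B) < d \<longrightarrow> rr' v t (A ** matrix_inv B) < e"
  proof (intro ballI impI)
    fix B :: "'a^'n^'n" assume "B \<in> GLn" and h: "mnorm v (A - B) < d"
    then have B: "invertible B" by (simp add: GLn_def)
    let ?X = "B ** matrix_inv A"
    have X: "invertible ?X" by (rule invertible_prod_inv2[OF B A])
    have "?X - mat 1 = (B - A) ** matrix_inv A" by (simp add: mm_diff_right inv_right A)
    then have "mnorm v (?X - mat 1) \<le> mnorm v (B - A) * ?K" using mnorm_mult by metis
    also have "\<dots> < d * ?K" using h K by (simp add: mnorm_diff_comm)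
    also have "\<dots> = min 1 e" using K by (simp add: d_def)
    finally have lt: "mnorm v (?X - mat 1) < min 1 e" .
    have "rr v (matrix_inv ?X) < min 1 e" using rr_both[OF X lt] by simp
    moreover have "matrix_inv ?X = A ** matrix_inv B" by (simp add: inv_mult invertible_inv A B inv_inv)
    ultimately have "rr v (A ** matrix_inv B) < e" by simp
    then show "rr' v t (A ** matrix_inv B) < e" using rr'_le_rr by (meson le_less_trans)
  qed
  with d show ?thesis by blast
qed

lemma top_right2:
  assumes A: "invertible (A::'a^'n::finite^'n)" and e: "e > 0"
  shows "\<exists>d>0. \<forall>B\<in>GLn. rr' v t (A ** matrix_inv B) < d \<longrightarrow> mnorm v (A - B) < e"
proof -
  let ?K = "mnorm v A"
  have K: "?K > 0" by (rule mnorm_pos[OF A])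
  define d where "d = min t (e / ?K)"
  have d: "d > 0" using K e t1 by (simp add: d_def)
  have "\<forall>B\<in>GLn. rr' v t (A ** matrix_inv B) < d \<longrightarrow> mnorm v (A - B) < e"
  proof (intro ballI impI)
    fix B :: "'a^'n^'n" assume "B \<in> GLn" and h: "rr' v t (A ** matrix_inv B) < d"
    then have B: "invertible B" by (simp add: GLn_def)
    have "rr v (A ** matrix_inv B) < d" using rr'_less_t[OF h] by (simp add: d_def)
    then have "rr v (B ** matrix_inv A) < d"
      using rr_inv[OF invertible_prod_inv2[OF A B]] by (simp add: inv_mult invertible_inv A B inv_inv)
    then have lt: "mnorm v (B ** matrix_inv A - mat 1) < d" unfolding rr_def by simp
    have "B - A = (B ** matrix_inv A - mat 1) ** A"
      by (simp add: mm_diff_right inv_left A flip: matrix_mul_assoc)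
    then have "mnorm v (B - A) \<le> mnorm v (B ** matrix_inv A - mat 1) * ?K" using mnorm_mult by metis
    also have "\<dots> < d * ?K" using lt K by simp
    also have "\<dots> \<le> (e / ?K) * ?K" using K by (intro mult_right_mono) (auto simp: d_def)
    also have "\<dots> = e" using K by simp
    finally show "mnorm v (A - B) < e" by (simp add: mnorm_diff_comm)
  qed
  with d show ?thesis by blast
qed

lemma top_left: "d_open GLn (\<lambda>A B::'a^'n::finite^'n. rr' v t (matrix_inv B ** A)) U \<longleftrightarrow>
             d_open GLn (\<lambda>A B. mnorm v (A - B)) U"
  apply (rule d_open_equiv)
   apply (intro ballI allI impI, rule top_left1, simp add: GLn_def, assumption)
  apply (intro ballI allI impI, rule top_left2, simp add: GLn_def, assumption)
  done

lemma top_right: "d_open GLn (\<lambda>A B::'a^'n::finite^'n. rr' v t (A ** matrix_inv B)) U \<longleftrightarrow>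
             d_open GLn (\<lambda>A B. mnorm v (A - B)) U"
  apply (rule d_open_equiv)
   apply (intro ballI allI impI, rule top_right1, simp add: GLn_def, assumption)
  apply (intro ballI allI impI, rule top_right2, simp add: GLn_def, assumption)
  done

end


context qpt begin

lemma det_le1:
  fixes M :: "'a^'n::finite^'n"
  assumes "\<And>i j. v (M $ i $ j) \<le> 1"
  shows "v (det M) \<le> 1"
  unfolding det_def
proof (rule v_sum)
  show "finite {p. p permutes (UNIV :: 'n set)}" by (rule finite_permutations) simp
  fix p
  have "v (\<Prod>i\<in>UNIV. M $ i $ p i) = (\<Prod>i\<in>UNIV. v (M $ i $ p i))" by (simp add: v_prod)
  also have "\<dots> \<le> 1" using assms by (intro prod_le_1) (auto simp: v_nonneg)
  finally show "v (of_int (sign p) * (\<Prod>i\<in>UNIV. M $ i $ p i)) \<le> 1"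
    by (simp add: v_mult v_of_int_sign)
qed simp

lemma mv_axis: "((M::'a^'n::finite^'n) *v axis j 1) $ k = M $ k $ j"
  by (simp add: matrix_vector_mult_def axis_def if_distrib sum.delta cong: if_cong)

lemma GLZ_inv:
  fixes B :: "'a^'n::finite^'n"
  assumes "B \<in> GLZ v"
  shows "invertible B" "mnorm v B \<le> 1" "mnorm v (matrix_inv B) \<le> 1"
proof -
  have Ble: "\<And>j k. v (B $ j $ k) \<le> 1" and dB: "v (det B) = 1" using assms by (auto simp: GLZ_def)
  then have d0: "det B \<noteq> 0" using v_zero_iff by force
  then show B: "invertible B" by (simp add: invertible_det_nz)
  show "mnorm v B \<le> 1" using Ble by (rule mnorm_le)
  show "mnorm v (matrix_inv B) \<le> 1"
  proof (rule mnorm_le)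
    fix k j
    let ?b = "axis j 1 :: 'a^'n"
    have "B *v (matrix_inv B *v ?b) = ?b" by (simp add: matrix_vector_mul_assoc inv_right B)
    then have "matrix_inv B *v ?b = (\<chi> k. det(\<chi> i j'. if j'=k then ?b$i else B$i$j') / det B)"
      using cramer[OF d0] by blast
    then have "matrix_inv B $ k $ j = det(\<chi> i j'. if j'=k then ?b$i else B$i$j') / det B"
      using mv_axis[of "matrix_inv B" j k] by simp
    then have "v (matrix_inv B $ k $ j) = v (det(\<chi> i j'. if j'=k then ?b$i else B$i$j'))"
      using v_div[OF dB] by simp
    also have "\<dots> \<le> 1"
      by (rule det_le1) (auto simp: Ble axis_def v_one)
    finally show "v (matrix_inv B $ k $ j) \<le> 1" .
  qed
qed

lemma GLZ_dist:
  fixes A B :: "'a^'n::finite^'n"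
  assumes "A \<in> GLZ v" "B \<in> GLZ v"
  shows "rr' v t (matrix_inv B ** A) = mnorm v (A - B)"
proof -
  note a = GLZ_inv[OF assms(1)] and b = GLZ_inv[OF assms(2)]
  let ?m = "mnorm v (A - B)"
  have m1: "?m \<le> 1"
  proof (rule mnorm_le)
    fix j k
    have "v ((A - B) $ j $ k) \<le> max (v (A $ j $ k)) (v (B $ j $ k))" using v_diff by simp
    also have "\<dots> \<le> 1" using assms by (auto simp: GLZ_def)
    finally show "v ((A - B) $ j $ k) \<le> 1" .
  qed
  have e1: "matrix_inv B ** A - mat 1 = matrix_inv B ** (A - B)" by (simp add: mm_diff_left inv_left b(1))
  have e2: "matrix_inv A ** B - mat 1 = matrix_inv A ** (B - A)" by (simp add: mm_diff_left inv_left a(1))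
  have u1: "mnorm v (matrix_inv B ** A - mat 1) \<le> ?m"
  proof -
    have "mnorm v (matrix_inv B ** A - mat 1) \<le> mnorm v (matrix_inv B) * ?m" unfolding e1 by (rule mnorm_mult)
    also have "\<dots> \<le> 1 * ?m" using b(3) by (intro mult_right_mono mnorm_nonneg)
    finally show ?thesis by simp
  qed
  have u2: "mnorm v (matrix_inv A ** B - mat 1) \<le> ?m"
  proof -
    have "mnorm v (matrix_inv A ** B - mat 1) \<le> mnorm v (matrix_inv A) * mnorm v (B - A)" unfolding e2 by (rule mnorm_mult)
    also have "\<dots> \<le> 1 * mnorm v (B - A)" using a(3) by (intro mult_right_mono mnorm_nonneg)
    also have "\<dots> = ?m" by (simp add: mnorm_diff_comm)
    finally show ?thesis by simp
  qed
  have l: "?m \<le> mnorm v (matrix_inv B ** A - mat 1)"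
  proof -
    have "A - B = B ** (matrix_inv B ** A - mat 1)"
      by (simp add: mm_diff_left matrix_mul_assoc inv_right b(1))
    then have "?m \<le> mnorm v B * mnorm v (matrix_inv B ** A - mat 1)" using mnorm_mult by metis
    also have "\<dots> \<le> 1 * mnorm v (matrix_inv B ** A - mat 1)" using b(2) by (intro mult_right_mono mnorm_nonneg)
    finally show ?thesis by simp
  qed
  have inv: "matrix_inv (matrix_inv B ** A) = matrix_inv A ** B"
    by (simp add: inv_mult invertible_inv a(1) b(1) inv_inv)
  have "rr v (matrix_inv B ** A) = ?m" unfolding rr_def inv using u1 u2 l by simp
  then show ?thesis unfolding rr'_def using m1 t1 by simp
qed

end


theorem mainTheorem8:
  fixes v :: "'a::field_char_0 \<Rightarrow> real" and p :: nat and t :: real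
  assumes "prime p" and "is_Qp p v" and "1 \<le> t" and "t \<le> real p"
  shows "rr' v t (mat 1 :: 'a^'n::finite^'n) = 0
    \<and> (\<forall>A::'a^'n^'n. A \<in> GLn \<and> A \<noteq> mat 1 \<longrightarrow> rr' v t A > 0)
    \<and> (\<forall>A::'a^'n^'n. A \<in> GLn \<longrightarrow> rr' v t (matrix_inv A) = rr' v t A)
    \<and> (\<forall>A B::'a^'n^'n. A \<in> GLn \<and> B \<in> GLn \<longrightarrow>
          rr' v t (A ** B) \<le> max (rr' v t A) (rr' v t B))
    \<and> ultrametric_on GLn (\<lambda>A B::'a^'n^'n. rr' v t (matrix_inv B ** A))
    \<and> (\<forall>A B C::'a^'n^'n. A \<in> GLn \<and> B \<in> GLn \<and> C \<in> GLn \<longrightarrow>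
          rr' v t (matrix_inv (C ** B) ** (C ** A)) = rr' v t (matrix_inv B ** A))
    \<and> (\<forall>U. d_open GLn (\<lambda>A B::'a^'n^'n. rr' v t (matrix_inv B ** A)) U \<longleftrightarrow>
             d_open GLn (\<lambda>A B. mnorm v (A - B)) U)
    \<and> ultrametric_on GLn (\<lambda>A B::'a^'n^'n. rr' v t (A ** matrix_inv B))
    \<and> (\<forall>A B C::'a^'n^'n. A \<in> GLn \<and> B \<in> GLn \<and> C \<in> GLn \<longrightarrow>
          rr' v t ((A ** C) ** matrix_inv (B ** C)) = rr' v t (A ** matrix_inv B))
    \<and> (\<forall>U. d_open GLn (\<lambda>A B::'a^'n^'n. rr' v t (A ** matrix_inv B)) U \<longleftrightarrow>
             d_open GLn (\<lambda>A B. mnorm v (A - B)) U)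
    \<and> (\<forall>A B::'a^'n^'n. A \<in> GLZ v \<and> B \<in> GLZ v \<longrightarrow>
          rr' v t (matrix_inv B ** A) = mnorm v (A - B))"
proof -
  interpret qpt p v t using assms by unfold_locales auto
  show ?thesis
  proof (intro conjI allI impI)
    show "rr' v t (mat 1 :: 'a^'n^'n) = 0" by (rule rr'_mat1)
    show "ultrametric_on GLn (\<lambda>A B::'a^'n^'n. rr' v t (matrix_inv B ** A))" by (rule ultra_left)
    show "ultrametric_on GLn (\<lambda>A B::'a^'n^'n. rr' v t (A ** matrix_inv B))" by (rule ultra_right)
    fix U
    show "d_open GLn (\<lambda>A B::'a^'n^'n. rr' v t (matrix_inv B ** A)) U \<longleftrightarrow> d_open GLn (\<lambda>A B. mnorm v (A - B)) U" by (rule top_left)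
    show "d_open GLn (\<lambda>A B::'a^'n^'n. rr' v t (A ** matrix_inv B)) U \<longleftrightarrow> d_open GLn (\<lambda>A B. mnorm v (A - B)) U" by (rule top_right)
  qed (auto simp: GLn_def intro: rr'_pos rr'_inv rr'_mult left_inv right_inv top_left top_right GLZ_dist)
qed

end
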